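(* Let $E$ be a strictly convex and reflexive Banach space, let $C\neq\emptyset$ be a closed convex subset of $E$, and let $\mathcal{S}=\{T_s: s\in S\}$ be a representation of a semigroup $S$ on $C$. If $A_C(\mathcal{S})\neq\emptyset$, then $F(\mathcal{S})\neq\emptyset$.
   Context: A representation of a semigroup $S$ on a set $C$ is a family $\{T_s:s\in S\}$ of maps $T_s:C\to C$ with $T_{st}=T_s\circ T_t$ for all $s,t\in S$ (no continuity or nonexpansiveness is assumed). A point $a\in E$ is an attractive point of $\mathcal{S}$ for $C$ if $\|a-T_sx\|\le\|a-x\|$ for all $x\in C$ and all $s\in S$; $A_C(\mathcal{S})$ denotes the set of all such points. $F(\mathcal{S})$ denotes the set of common fixed points, i.e. $x\in C$ with $T_sx=x$ for all $s\in S$. *)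

theory Defs
  imports "HOL-Analysis.Analysis"
begin

definition strictly_convex_space :: "'a::real_normed_vector itself \<Rightarrow> bool" where
  "strictly_convex_space (_::'a itself) \<longleftrightarrow>
     (\<forall>x y::'a. norm x = 1 \<and> norm y = 1 \<and> x \<noteq> y \<longrightarrow> norm ((1/2) *\<^sub>R (x + y)) < 1)"

text \<open>Reflexivity: the canonical embedding of E into its bidual E** is surjective.
  The dual of E is the type of bounded linear functionals to real.\<close>
definition reflexive_space :: "'a::real_normed_vector itself \<Rightarrow> bool" where
  "reflexive_space (_::'a itself) \<longleftrightarrow>
     (\<forall>\<phi> :: ('a \<Rightarrow>\<^sub>L real) \<Rightarrow>\<^sub>L real. \<exists>x::'a. \<forall>f. blinfun_apply \<phi> f = blinfun_apply f x)"

definition representation_on :: "'a set \<Rightarrow> ('s::semigroup_mult \<Rightarrow> 'a \<Rightarrow> 'a) \<Rightarrow> bool" where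
  "representation_on C T \<longleftrightarrow>
     (\<forall>s. \<forall>x\<in>C. T s x \<in> C) \<and> (\<forall>s t. \<forall>x\<in>C. T (s * t) x = T s (T t x))"

definition attractive_points :: "'a::real_normed_vector set \<Rightarrow> ('s \<Rightarrow> 'a \<Rightarrow> 'a) \<Rightarrow> 'a set" where
  "attractive_points C T = {a. \<forall>x\<in>C. \<forall>s. norm (a - T s x) \<le> norm (a - x)}"

definition common_fixed_points :: "'a set \<Rightarrow> ('s \<Rightarrow> 'a \<Rightarrow> 'a) \<Rightarrow> 'a set" where
  "common_fixed_points C T = {x\<in>C. \<forall>s. T s x = x}"

end

theory Submission
  imports Defs
begin


definition sublin :: "('v::real_vector \<Rightarrow> real) \<Rightarrow> bool" where
  "sublin p \<longleftrightarrow> (\<forall>x y. p (x + y) \<le> p x + p y) \<and> (\<forall>c x. 0 \<le> c \<longrightarrow> p (c *\<^sub>R x) = c * p x)"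

lemma sublin_add: "sublin p \<Longrightarrow> p (x + y) \<le> p x + p y"
  by (simp add: sublin_def)
lemma sublin_scale: "sublin p \<Longrightarrow> 0 \<le> c \<Longrightarrow> p (c *\<^sub>R x) = c * p x"
  by (simp add: sublin_def)
lemma sublin_0: "sublin p \<Longrightarrow> p 0 = 0"
  using sublin_scale[of p 0 0] by simp
lemma sublin_neg: "sublin p \<Longrightarrow> - p (- x) \<le> p x"
  using sublin_add[of p x "-x"] sublin_0[of p] by simp

lemma shift_sublin:
  fixes q :: "'v::real_vector \<Rightarrow> real" and y :: 'v
  assumes q: "sublin q"
  defines "r \<equiv> \<lambda>x. (INF t\<in>{0::real..}. q (x + t *\<^sub>R y) - t * q y)"
  shows "sublin r" "\<And>x. r x \<le> q x" "r (- y) \<le> - q y"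
proof -
  have lb: "- q (- x) \<le> q (x + t *\<^sub>R y) - t * q y" if "t \<ge> 0" for x t
  proof -
    have "q (t *\<^sub>R y) \<le> q (x + t *\<^sub>R y) + q (- x)"
      using sublin_add[OF q, of "x + t *\<^sub>R y" "-x"] by simp
    then show ?thesis using sublin_scale[OF q that] by simp
  qed
  have bdd: "bdd_below ((\<lambda>t. q (x + t *\<^sub>R y) - t * q y) ` {0..})" for x
    using lb by (intro bdd_belowI2[where m="- q (- x)"]) auto
  have low: "r x \<le> q (x + t *\<^sub>R y) - t * q y" if "t \<ge> 0" for x t
    unfolding r_def using that bdd by (intro cINF_lower) auto
  have great: "z \<le> r x" if "\<And>t. t \<ge> 0 \<Longrightarrow> z \<le> q (x + t *\<^sub>R y) - t * q y" for x z
    unfolding r_def using that by (intro cINF_greatest) auto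
  show "r x \<le> q x" for x using low[of 0 x] by simp
  show "r (- y) \<le> - q y" using low[of 1 "-y"] sublin_0[OF q] by simp
  have add: "r (x + x') \<le> r x + r x'" for x x'
  proof -
    have "r (x + x') - (q (x' + t *\<^sub>R y) - t * q y) \<le> r x" if t: "t \<ge> 0" for t
    proof (rule great)
      fix s :: real assume s: "s \<ge> 0"
      have "r (x + x') \<le> q (x + x' + (s + t) *\<^sub>R y) - (s + t) * q y"
        using low[of "s + t"] s t by simp
      also have "q (x + x' + (s + t) *\<^sub>R y) \<le> q (x + s *\<^sub>R y) + q (x' + t *\<^sub>R y)"
        using sublin_add[OF q, of "x + s *\<^sub>R y" "x' + t *\<^sub>R y"] by (simp add: algebra_simps)
      finally show "r (x + x') - (q (x' + t *\<^sub>R y) - t * q y) \<le> q (x + s *\<^sub>R y) - s * q y"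
        by (simp add: algebra_simps)
    qed
    then have "r (x + x') - r x \<le> r x'"
      by (intro great) (auto simp: algebra_simps)
    then show ?thesis by simp
  qed
  have hom: "r (c *\<^sub>R x) = c * r x" if c: "c \<ge> 0" for c x
  proof (cases "c = 0")
    case True
    have "r 0 = 0"
    proof (rule antisym)
      show "r 0 \<le> 0" using low[of 0 0] sublin_0[OF q] by simp
      show "0 \<le> r 0" by (rule great) (simp add: sublin_scale[OF q])
    qed
    then show ?thesis using True by simp
  next
    case False
    with c have c: "c > 0" by simp
    have 1: "r (c *\<^sub>R x) / c \<le> r x"
    proof (rule great)
      fix t :: real assume t: "t \<ge> 0"
      have "r (c *\<^sub>R x) \<le> q (c *\<^sub>R x + (c * t) *\<^sub>R y) - (c * t) * q y"
        using low[of "c*t"] c t by simp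
      also have "q (c *\<^sub>R x + (c * t) *\<^sub>R y) = c * q (x + t *\<^sub>R y)"
        using sublin_scale[OF q, of c "x + t *\<^sub>R y"] c by (simp add: algebra_simps)
      finally show "r (c *\<^sub>R x) / c \<le> q (x + t *\<^sub>R y) - t * q y"
        using c by (simp add: field_simps)
    qed
    have 2: "c * r x \<le> r (c *\<^sub>R x)"
    proof (rule great)
      fix t :: real assume t: "t \<ge> 0"
      have "r x \<le> q (x + (t / c) *\<^sub>R y) - (t / c) * q y"
        using low[of "t/c"] c t by simp
      also have "q (c *\<^sub>R x + t *\<^sub>R y) = c * q (x + (t / c) *\<^sub>R y)"
        using sublin_scale[OF q, of c "x + (t/c) *\<^sub>R y"] c by (simp add: algebra_simps)
      ultimately show "c * r x \<le> q (c *\<^sub>R x + t *\<^sub>R y) - t * q y"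
        using c by (simp add: field_simps)
    qed
    from 1 2 c show ?thesis by (simp add: field_simps)
  qed
  show "sublin r" unfolding sublin_def using add hom by blast
qed


lemma HB0:
  fixes p :: "'v::real_vector \<Rightarrow> real"
  assumes p: "sublin p"
  shows "\<exists>F. linear F \<and> (\<forall>x. F x \<le> p x)"
proof -
  define A where "A = {q::'v\<Rightarrow>real. sublin q \<and> (\<forall>x. q x \<le> p x)}"
  define P where "P = (\<lambda>a b::'v\<Rightarrow>real. \<forall>x. b x \<le> a x)"
  have po: "partial_order_on A (relation_of P A)"
    proof (rule partial_order_on_relation_ofI) qed (auto simp: P_def fun_eq_iff intro: order_trans antisym)
  have "\<exists>u\<in>A. \<forall>a\<in>C. P a u" if C: "C \<in> Chains (relation_of P A)" for C
  proof (cases "C = {}")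
    case True
    then show ?thesis using p by (auto simp: A_def)
  next
    case False
    have CA: "C \<subseteq> A" using Chains_relation_of[OF C] .
    have tot: "P a b \<or> P b a" if "a \<in> C" "b \<in> C" for a b
      using C that unfolding Chains_def relation_of_def by auto
    define u where "u = (\<lambda>x. INF q\<in>C. q x)"
    have bdd: "bdd_below ((\<lambda>q. q x) ` C)" for x
    proof (intro bdd_belowI2[where m="- p (- x)"])
      fix q assume "q \<in> C"
      then have "sublin q" "q (- x) \<le> p (- x)" using CA by (auto simp: A_def)
      then show "- p (- x) \<le> q x" using sublin_neg[of q x] by simp
    qed
    have low: "u x \<le> q x" if "q \<in> C" for q x
      unfolding u_def using that bdd by (intro cINF_lower) auto
    have great: "z \<le> u x" if "\<And>q. q \<in> C \<Longrightarrow> z \<le> q x" for z x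
      unfolding u_def using that False by (intro cINF_greatest) auto
    have sq: "sublin q" if "q \<in> C" for q using that CA by (auto simp: A_def)
    have add: "u (x + y) \<le> u x + u y" for x y
    proof -
      have "u (x + y) - q2 y \<le> u x" if q2: "q2 \<in> C" for q2
      proof (rule great)
        fix q1 assume q1: "q1 \<in> C"
        show "u (x + y) - q2 y \<le> q1 x"
        proof (cases "P q1 q2")
          case True
          have "u (x + y) \<le> q2 (x + y)" using low q2 by blast
          also have "\<dots> \<le> q2 x + q2 y" using sublin_add[OF sq[OF q2]] .
          moreover have "q2 x \<le> q1 x" using True by (simp add: P_def)
          ultimately show ?thesis by linarith
        next
          case f: False
          then have "P q2 q1" using tot q1 q2 by blast
          have "u (x + y) \<le> q1 (x + y)" using low q1 by blast
          also have "\<dots> \<le> q1 x + q1 y" using sublin_add[OF sq[OF q1]] .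
          moreover have "q1 y \<le> q2 y" using \<open>P q2 q1\<close> by (simp add: P_def)
          ultimately show ?thesis by linarith
        qed
      qed
      then have "u (x + y) - u x \<le> u y" by (intro great) (auto simp: algebra_simps)
      then show ?thesis by simp
    qed
    have hom: "u (c *\<^sub>R x) = c * u x" if c: "c \<ge> 0" for c x
    proof (cases "c = 0")
      case True
      obtain q0 where q0: "q0 \<in> C" using False by blast
      have "u 0 = 0"
      proof (rule antisym)
        show "u 0 \<le> 0" using low[OF q0, of 0] sublin_0[OF sq[OF q0]] by simp
        show "0 \<le> u 0" by (rule great) (simp add: sublin_0[OF sq])
      qed
      then show ?thesis using True by simp
    next
      case f: False
      with c have c: "c > 0" by simp
      have 1: "u (c *\<^sub>R x) / c \<le> u x"
      proof (rule great)
        fix q assume q: "q \<in> C"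
        have "u (c *\<^sub>R x) \<le> q (c *\<^sub>R x)" using low[OF q] .
        then show "u (c *\<^sub>R x) / c \<le> q x" using sublin_scale[OF sq[OF q], of c x] c
          by (simp add: field_simps)
      qed
      have 2: "c * u x \<le> u (c *\<^sub>R x)"
      proof (rule great)
        fix q assume q: "q \<in> C"
        have "u x \<le> q x" using low[OF q] .
        then show "c * u x \<le> q (c *\<^sub>R x)" using sublin_scale[OF sq[OF q], of c x] c
          by simp
      qed
      from 1 2 c show ?thesis by (simp add: field_simps)
    qed
    have "u \<in> A"
    proof -
      obtain q0 where q0: "q0 \<in> C" using False by blast
      have "u x \<le> p x" for x
      proof -
        have "q0 x \<le> p x" using q0 CA by (auto simp: A_def)
        then show ?thesis using low[OF q0, of x] by linarith
      qed
      then show ?thesis using add hom by (auto simp: A_def sublin_def)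
    qed
    moreover have "\<forall>a\<in>C. P a u" using low by (auto simp: P_def)
    ultimately show ?thesis by blast
  qed
  from predicate_Zorn[OF po this] obtain m where m: "m \<in> A"
    and mmin: "\<And>a. a \<in> A \<Longrightarrow> P m a \<Longrightarrow> a = m" by blast
  have sm: "sublin m" and mp: "\<And>x. m x \<le> p x" using m by (auto simp: A_def)
  have neg: "m (- y) = - m y" for y
  proof -
    define r where "r = (\<lambda>x. (INF t\<in>{0::real..}. m (x + t *\<^sub>R y) - t * m y))"
    have r: "sublin r" "\<And>x. r x \<le> m x" "r (- y) \<le> - m y"
      using shift_sublin[OF sm, where y=y] unfolding r_def by auto
    have "r \<in> A" using r mp by (auto simp: A_def intro: order_trans)
    moreover have "P m r" using r by (auto simp: P_def)
    ultimately have "r = m" using mmin by blast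
    then have "m (- y) \<le> - m y" using r by simp
    moreover have "- m y \<le> m (- y)" using sublin_neg[OF sm, of "-y"] by simp
    ultimately show ?thesis by simp
  qed
  have madd: "m (x + y) = m x + m y" for x y
  proof (rule antisym)
    show "m (x + y) \<le> m x + m y" using sublin_add[OF sm] .
    have "m (- x + - y) \<le> m (- x) + m (- y)" using sublin_add[OF sm] .
    then have "- m (x + y) \<le> - m x - m y" using neg[of "x+y"] neg[of x] neg[of y] by (simp add: algebra_simps)
    then show "m x + m y \<le> m (x + y)" by simp
  qed
  have mscale: "m (c *\<^sub>R x) = c * m x" for c x
  proof (cases "c \<ge> 0")
    case True then show ?thesis using sublin_scale[OF sm] by simp
  next
    case False
    have "m (c *\<^sub>R x) = m (- ((- c) *\<^sub>R x))" by simp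
    also have "\<dots> = - m ((- c) *\<^sub>R x)" by (rule neg)
    also have "\<dots> = c * m x" using sublin_scale[OF sm, of "-c" x] False by simp
    finally show ?thesis .
  qed
  have "linear m" by (rule linearI) (use madd mscale in auto)
  then show ?thesis using mp by blast
qed

lemma HB1:
  fixes p :: "'v::real_vector \<Rightarrow> real"
  assumes p: "sublin p"
  shows "\<exists>F. linear F \<and> (\<forall>x. F x \<le> p x) \<and> F z = p z"
proof -
  define r where "r = (\<lambda>x. (INF t\<in>{0::real..}. p (x + t *\<^sub>R z) - t * p z))"
  have r: "sublin r" "\<And>x. r x \<le> p x" "r (- z) \<le> - p z"
    using shift_sublin[OF p, where y=z] unfolding r_def by auto
  obtain F where F: "linear F" "\<And>x. F x \<le> r x" using HB0[OF r(1)] by blast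
  have "F (- z) \<le> - p z" using F(2)[of "-z"] r(3) by simp
  then have "p z \<le> F z" using linear_neg[OF F(1), of z] by simp
  moreover have "F z \<le> p z" using F(2)[of z] r(2)[of z] by simp
  ultimately show ?thesis using F r(2) by (intro exI[of _ F]) (auto intro: order_trans)
qed



lemma separation:
  fixes C :: "'a::real_normed_vector set"
  assumes cl: "closed C" and cv: "convex C" and ne: "C \<noteq> {}" and x0: "x0 \<notin> C"
  shows "\<exists>f::'a \<Rightarrow>\<^sub>L real. \<exists>e>0. \<forall>c\<in>C. blinfun_apply f c \<le> blinfun_apply f x0 - e"
proof -
  define d0 where "d0 = infdist x0 C"
  have d0: "d0 > 0" using in_closed_iff_infdist_zero[OF cl ne, of x0] x0 infdist_nonneg[of x0 C]
    unfolding d0_def by linarith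
  define r where "r = d0 / 2"
  have r: "r > 0" using d0 by (simp add: r_def)
  obtain c0 where c0: "c0 \<in> C" using ne by blast
  define z where "z = x0 - c0"
  have z: "z \<noteq> 0" using c0 x0 by (auto simp: z_def)
  define K where "K = {k. \<exists>t c w. t \<ge> 0 \<and> c \<in> C \<and> norm w \<le> r \<and> k = t *\<^sub>R (c + w - x0)}"
  have Kmem: "t *\<^sub>R (c + w - x0) \<in> K" if "t \<ge> 0" "c \<in> C" "norm w \<le> r" for t c w
    unfolding K_def using that by blast
  have K0: "0 \<in> K" using Kmem[of 0 c0 0] c0 r by simp
  have Kscale: "s *\<^sub>R k \<in> K" if "s \<ge> 0" "k \<in> K" for s k
  proof -
    from that(2) obtain t c w where "t \<ge> 0" "c \<in> C" "norm w \<le> r" "k = t *\<^sub>R (c + w - x0)"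
      unfolding K_def by blast
    then show ?thesis using that(1) Kmem[of "s * t" c w] by simp
  qed
  have Kadd: "k1 + k2 \<in> K" if "k1 \<in> K" "k2 \<in> K" for k1 k2
  proof -
    from that(1) obtain t1 c1 w1 where 1: "t1 \<ge> 0" "c1 \<in> C" "norm w1 \<le> r" "k1 = t1 *\<^sub>R (c1 + w1 - x0)"
      unfolding K_def by blast
    from that(2) obtain t2 c2 w2 where 2: "t2 \<ge> 0" "c2 \<in> C" "norm w2 \<le> r" "k2 = t2 *\<^sub>R (c2 + w2 - x0)"
      unfolding K_def by blast
    show ?thesis
    proof (cases "t1 + t2 = 0")
      case True
      then have "t1 = 0" "t2 = 0" using 1 2 by auto
      then show ?thesis using 1 2 K0 by simp
    next
      case False
      define T where "T = t1 + t2"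
      have T: "T > 0" using False 1 2 by (simp add: T_def)
      define a where "a = t1 / T"
      define b where "b = t2 / T"
      have ab: "a \<ge> 0" "b \<ge> 0" "a + b = 1" using T 1 2
        by (auto simp: a_def b_def T_def add_divide_distrib[symmetric])
      have "a *\<^sub>R c1 + b *\<^sub>R c2 \<in> C" using cv 1 2 ab unfolding convex_def by blast
      moreover have "norm (a *\<^sub>R w1 + b *\<^sub>R w2) \<le> r"
      proof -
        have "norm (a *\<^sub>R w1 + b *\<^sub>R w2) \<le> a * norm w1 + b * norm w2"
          using norm_triangle_ineq[of "a *\<^sub>R w1" "b *\<^sub>R w2"] ab by simp
        also have "\<dots> \<le> a * r + b * r" using ab 1 2 by (intro add_mono mult_left_mono) auto
        also have "\<dots> = r" using ab by (simp add: distrib_right[symmetric])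
        finally show ?thesis .
      qed
      moreover have "k1 + k2 = T *\<^sub>R ((a *\<^sub>R c1 + b *\<^sub>R c2) + (a *\<^sub>R w1 + b *\<^sub>R w2) - x0)"
      proof -
        have ta: "T * a = t1" and tb: "T * b = t2" using T by (auto simp: a_def b_def)
        have e1: "T *\<^sub>R (a *\<^sub>R v) = t1 *\<^sub>R v" for v :: 'a by (simp only: scaleR_scaleR ta)
        have e2: "T *\<^sub>R (b *\<^sub>R v) = t2 *\<^sub>R v" for v :: 'a by (simp only: scaleR_scaleR tb)
        have "T *\<^sub>R ((a *\<^sub>R c1 + b *\<^sub>R c2) + (a *\<^sub>R w1 + b *\<^sub>R w2) - x0)
            = t1 *\<^sub>R c1 + t2 *\<^sub>R c2 + (t1 *\<^sub>R w1 + t2 *\<^sub>R w2) - T *\<^sub>R x0"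
          by (simp only: scaleR_add_right scaleR_diff_right e1 e2)
        moreover have "T *\<^sub>R x0 = t1 *\<^sub>R x0 + t2 *\<^sub>R x0" by (simp add: T_def scaleR_add_left)
        ultimately show ?thesis unfolding 1(4) 2(4) by (simp only: scaleR_add_right scaleR_diff_right) (simp add: algebra_simps)
      qed
      ultimately show ?thesis using T Kmem by auto
    qed
  qed
  define p where "p = (\<lambda>y. INF k\<in>K. norm (y - k))"
  have bdd: "bdd_below ((\<lambda>k. norm (y - k)) ` K)" for y by (intro bdd_belowI2[where m=0]) auto
  have low: "p y \<le> norm (y - k)" if "k \<in> K" for y k
    unfolding p_def using that bdd by (intro cINF_lower) auto
  have great: "z \<le> p y" if "\<And>k. k \<in> K \<Longrightarrow> z \<le> norm (y - k)" for z y
    unfolding p_def using that K0 by (intro cINF_greatest) auto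
  have pnn: "p y \<ge> 0" for y by (rule great) simp
  have pnorm: "p y \<le> norm y" for y using low[OF K0] by simp
  have padd: "p (x + y) \<le> p x + p y" for x y
  proof -
    have "p (x + y) - norm (y - k2) \<le> p x" if k2: "k2 \<in> K" for k2
    proof (rule great)
      fix k1 assume k1: "k1 \<in> K"
      have "p (x + y) \<le> norm (x + y - (k1 + k2))" using low Kadd[OF k1 k2] by blast
      also have "\<dots> \<le> norm (x - k1) + norm (y - k2)"
        using norm_triangle_ineq[of "x - k1" "y - k2"] by (simp add: algebra_simps)
      finally show "p (x + y) - norm (y - k2) \<le> norm (x - k1)" by simp
    qed
    then have "p (x + y) - p x \<le> p y" by (intro great) (auto simp: algebra_simps)
    then show ?thesis by simp
  qed
  have phom: "p (c *\<^sub>R x) = c * p x" if c: "c \<ge> 0" for c x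
  proof (cases "c = 0")
    case True
    then show ?thesis using pnorm[of 0] pnn[of 0] by simp
  next
    case False
    with c have c: "c > 0" by simp
    have 1: "p (c *\<^sub>R x) / c \<le> p x"
    proof (rule great)
      fix k assume k: "k \<in> K"
      have "p (c *\<^sub>R x) \<le> norm (c *\<^sub>R x - c *\<^sub>R k)" using low Kscale[OF _ k, of c] c by simp
      also have "\<dots> = c * norm (x - k)" using c by (simp add: scaleR_diff_right[symmetric])
      finally show "p (c *\<^sub>R x) / c \<le> norm (x - k)" using c by (simp add: field_simps)
    qed
    have 2: "c * p x \<le> p (c *\<^sub>R x)"
    proof (rule great)
      fix k assume k: "k \<in> K"
      have "p x \<le> norm (x - (1/c) *\<^sub>R k)" using low Kscale[OF _ k, of "1/c"] c by simp
      also have "c * norm (x - (1/c) *\<^sub>R k) = norm (c *\<^sub>R x - k)"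
      proof -
        have "c *\<^sub>R (x - (1/c) *\<^sub>R k) = c *\<^sub>R x - k" using c by (simp add: algebra_simps)
        then show ?thesis using c by (metis abs_of_pos norm_scaleR)
      qed
      ultimately show "c * p x \<le> norm (c *\<^sub>R x - k)" using c by (metis mult_left_mono less_le)
    qed
    from 1 2 c show ?thesis by (simp add: field_simps)
  qed
  have sp: "sublin p" unfolding sublin_def using padd phom by blast
  have pz: "d0 \<le> p z"
  proof (rule great)
    fix k assume "k \<in> K"
    then obtain t c w where t: "t \<ge> 0" "c \<in> C" "norm w \<le> r" "k = t *\<^sub>R (c + w - x0)"
      unfolding K_def by blast
    define c' where "c' = (1/(1+t)) *\<^sub>R c0 + (t/(1+t)) *\<^sub>R c"
    have "c' \<in> C" unfolding c'_def using cv c0 t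
      by (intro convexD) (auto simp: add_divide_distrib[symmetric])
    then have dc: "d0 \<le> norm (x0 - c')" unfolding d0_def using infdist_le[of c' C x0] by (simp add: dist_norm)
    have eq: "z - k = (1 + t) *\<^sub>R (x0 - c') - t *\<^sub>R w"
    proof -
      have "(1 + t) *\<^sub>R c' = c0 + t *\<^sub>R c" using t
        by (simp add: c'_def scaleR_add_right divide_simps)
      then show ?thesis unfolding z_def t(4) by (simp add: algebra_simps)
    qed
    have "norm (z - k) \<ge> norm ((1 + t) *\<^sub>R (x0 - c')) - norm (t *\<^sub>R w)"
      unfolding eq by (rule norm_triangle_ineq2)
    moreover have "norm ((1 + t) *\<^sub>R (x0 - c')) = (1 + t) * norm (x0 - c')" using t by simp
    moreover have "norm (t *\<^sub>R w) \<le> t * r" using t by (simp add: mult_left_mono)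
    moreover have "(1 + t) * d0 \<le> (1 + t) * norm (x0 - c')" using dc t by (intro mult_left_mono) auto
    moreover have "(1 + t) * d0 = d0 + t * d0" by (simp add: algebra_simps)
    moreover have "t * r = t * d0 / 2" by (simp add: r_def)
    moreover have "t * d0 \<ge> 0" using t d0 by simp
    ultimately show "d0 \<le> norm (z - k)" by linarith
  qed
  obtain F where F: "linear F" "\<And>x. F x \<le> p x" "F z = p z" using HB1[OF sp, of z] by blast
  have Fb: "norm (F x) \<le> norm x * 1" for x
  proof -
    have "F x \<le> norm x" using F(2)[of x] pnorm[of x] by simp
    moreover have "- F x \<le> norm x" using F(2)[of "-x"] pnorm[of "-x"] linear_neg[OF F(1), of x] by simp
    ultimately show ?thesis by simp
  qed
  have bl: "bounded_linear F"
    using F(1) Fb by (intro bounded_linear_intro[where K=1]) (auto simp: linear_add linear_scale)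
  define e where "e = r * d0 / norm z"
  have e: "e > 0" using r d0 z by (simp add: e_def)
  have "F c \<le> F x0 - e" if c: "c \<in> C" for c
  proof -
    define w where "w = (r / norm z) *\<^sub>R z"
    have nw: "norm w \<le> r" using z r by (simp add: w_def)
    have "c + w - x0 \<in> K" using c nw Kmem[of 1 c w] by simp
    then have "F (c + w - x0) \<le> 0" using F(2) low[of "c + w - x0" "c + w - x0"] by (metis diff_self norm_zero order_trans)
    then have "F c + F w - F x0 \<le> 0" using F(1) by (simp add: linear_add linear_diff)
    moreover have "F w = (r / norm z) * F z" using F(1) by (simp add: w_def linear_scale)
    moreover have "(r / norm z) * d0 \<le> (r / norm z) * F z" using F(3) pz r by (intro mult_left_mono) auto
    ultimately show ?thesis unfolding e_def by simp
  qed
  then show ?thesis using e bl bounded_linear_Blinfun_apply[OF bl]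
    by (intro exI[of _ "Blinfun F"] exI[of _ e]) auto
qed



lemma weak_cluster:
  fixes x :: "nat \<Rightarrow> 'a::real_normed_vector"
  assumes refl: "reflexive_space TYPE('a)" and bd: "\<And>n. norm (x n) \<le> M"
  shows "\<exists>y. \<forall>f::'a \<Rightarrow>\<^sub>L real. \<forall>m. blinfun_apply f y \<le> (SUP n\<in>{m..}. blinfun_apply f (x n))"
proof -
  have M: "M \<ge> 0" using bd[of 0] norm_ge_zero[of "x 0"] by linarith
  define s where "s = (\<lambda>m (f::'a \<Rightarrow>\<^sub>L real). SUP n\<in>{m..}. blinfun_apply f (x n))"
  have fb: "\<bar>blinfun_apply f (x n)\<bar> \<le> norm f * M" for f :: "'a \<Rightarrow>\<^sub>L real" and n
    using norm_blinfun[of f "x n"] bd[of n] by (simp add: order_trans mult_left_mono)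
  have bdda: "bdd_above ((\<lambda>n. blinfun_apply f (x n)) ` {m..})" for f :: "'a \<Rightarrow>\<^sub>L real" and m
  proof (rule bdd_aboveI2)
    fix n show "blinfun_apply f (x n) \<le> norm f * M" using fb[of f n] by (simp add: abs_le_iff)
  qed
  have sup: "blinfun_apply f (x n) \<le> s m f" if "m \<le> n" for f m n
    unfolding s_def using that bdda by (intro cSUP_upper) auto
  have sleast: "s m f \<le> z" if "\<And>n. m \<le> n \<Longrightarrow> blinfun_apply f (x n) \<le> z" for f m z
    unfolding s_def using that by (intro cSUP_least) auto
  have slow: "- (norm f * M) \<le> s m f" for f m
    using sup[of m m f] fb[of f m] by (auto simp: abs_le_iff)
  have shigh: "s m f \<le> norm f * M" for f m
    using fb by (intro sleast) (auto simp: abs_le_iff)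
  have santi: "s m' f \<le> s m f" if "m \<le> m'" for f m m'
    using that by (intro sleast sup) auto
  define p where "p = (\<lambda>f. INF m. s m f)"
  have bddb: "bdd_below (range (\<lambda>m. s m f))" for f
    using slow by (intro bdd_belowI2[where m="- (norm f * M)"]) auto
  have plow: "p f \<le> s m f" for f m unfolding p_def using bddb by (intro cINF_lower) auto
  have pgreat: "z \<le> p f" if "\<And>m. z \<le> s m f" for z f unfolding p_def using that by (intro cINF_greatest) auto
  have sadd: "s m (f + g) \<le> s m f + s m g" for m f g
    by (intro sleast) (auto simp: plus_blinfun.rep_eq intro: add_mono sup)
  have padd: "p (f + g) \<le> p f + p g" for f g
  proof -
    have "p (f + g) - s m2 g \<le> p f" for m2
    proof (rule pgreat)
      fix m1
      have "p (f + g) \<le> s (max m1 m2) (f + g)" by (rule plow)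
      also have "\<dots> \<le> s (max m1 m2) f + s (max m1 m2) g" by (rule sadd)
      also have "\<dots> \<le> s m1 f + s m2 g" by (intro add_mono santi) auto
      finally show "p (f + g) - s m2 g \<le> s m1 f" by simp
    qed
    then have "p (f + g) - p f \<le> p g" by (intro pgreat) (auto simp: algebra_simps)
    then show ?thesis by simp
  qed
  have shom: "s m (c *\<^sub>R f) = c * s m f" if c: "c > 0" for c m f
  proof (rule antisym)
    show "s m (c *\<^sub>R f) \<le> c * s m f"
      using c by (intro sleast) (auto simp: scaleR_blinfun.rep_eq intro: mult_left_mono sup)
    have "s m f \<le> s m (c *\<^sub>R f) / c"
    proof (rule sleast)
      fix n assume "m \<le> n"
      then have "c * blinfun_apply f (x n) \<le> s m (c *\<^sub>R f)"
        using sup[of m n "c *\<^sub>R f"] by (simp add: scaleR_blinfun.rep_eq)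
      then show "blinfun_apply f (x n) \<le> s m (c *\<^sub>R f) / c" using c by (simp add: field_simps)
    qed
    then show "c * s m f \<le> s m (c *\<^sub>R f)" using c by (simp add: field_simps)
  qed
  have phom: "p (c *\<^sub>R f) = c * p f" if c: "c \<ge> 0" for c f
  proof (cases "c = 0")
    case True
    have "s m 0 = 0" for m unfolding s_def by simp
    then have "p 0 = 0" unfolding p_def by simp
    then show ?thesis using True by simp
  next
    case False
    with c have c: "c > 0" by simp
    show ?thesis
    proof (rule antisym)
      have "p (c *\<^sub>R f) / c \<le> p f"
      proof (rule pgreat)
        fix m
        have "p (c *\<^sub>R f) \<le> c * s m f" using plow[of "c *\<^sub>R f" m] shom[OF c] by simp
        then show "p (c *\<^sub>R f) / c \<le> s m f" using c by (simp add: field_simps)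
      qed
      then show "p (c *\<^sub>R f) \<le> c * p f" using c by (simp add: field_simps)
      show "c * p f \<le> p (c *\<^sub>R f)"
      proof (rule pgreat)
        fix m show "c * p f \<le> s m (c *\<^sub>R f)" using plow[of f m] shom[OF c] c by simp
      qed
    qed
  qed
  have sp: "sublin p" unfolding sublin_def using padd phom by blast
  obtain \<phi> where phi: "linear \<phi>" "\<And>f. \<phi> f \<le> p f" using HB0[OF sp] by blast
  have phib: "norm (\<phi> f) \<le> norm f * M" for f
  proof -
    have "\<phi> f \<le> norm f * M" using phi(2)[of f] plow[of f 0] shigh[of 0 f] by simp
    moreover have "- \<phi> f \<le> norm f * M"
      using phi(2)[of "-f"] plow[of "-f" 0] shigh[of 0 "-f"] linear_neg[OF phi(1), of f] by simp
    ultimately show ?thesis by simp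
  qed
  have bl: "bounded_linear \<phi>"
    using phi(1) phib by (intro bounded_linear_intro[where K=M]) (auto simp: linear_add linear_scale)
  obtain y where y: "\<And>f. blinfun_apply (Blinfun \<phi>) f = blinfun_apply f y"
    using refl unfolding reflexive_space_def by blast
  have "blinfun_apply f y \<le> s m f" for f m
    using y[of f] bounded_linear_Blinfun_apply[OF bl] phi(2)[of f] plow[of f m] by simp
  then show ?thesis unfolding s_def by blast
qed



lemma nearest_exists:
  fixes C :: "'a::real_normed_vector set"
  assumes refl: "reflexive_space TYPE('a)" and cl: "closed C" and cv: "convex C" and ne: "C \<noteq> {}"
  shows "\<exists>z\<in>C. \<forall>c\<in>C. norm (a - z) \<le> norm (a - c)"
proof -
  define d where "d = infdist a C"
  have dle: "d \<le> norm (a - c)" if "c \<in> C" for c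
    using infdist_le[OF that, of a] by (simp add: d_def dist_norm)
  have "\<exists>c\<in>C. norm (a - c) < d + 1 / (real n + 1)" for n
  proof -
    have "(INF c\<in>C. dist a c) < d + 1 / (real n + 1)"
      using infdist_notempty[OF ne, of a] by (simp add: d_def add_pos_pos)
    then have "\<exists>c\<in>C. dist a c < d + 1 / (real n + 1)"
      using cINF_less_iff[OF ne bdd_below_image_dist[of a C]] by blast
    then show ?thesis by (simp add: dist_norm)
  qed
  then obtain x where x: "\<And>n. x n \<in> C" "\<And>n. norm (a - x n) < d + 1 / (real n + 1)" by metis
  have d0: "d \<ge> 0" by (simp add: d_def infdist_nonneg)
  have bd: "norm (x n) \<le> norm a + d + 1" for n
  proof -
    have "1 / (real n + 1) \<le> 1" by simp
    moreover have "norm (x n) \<le> norm a + norm (a - x n)" using norm_triangle_ineq4[of a "a - x n"] by simp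
    ultimately show ?thesis using x(2)[of n] by linarith
  qed
  have "\<exists>y. \<forall>f::'a \<Rightarrow>\<^sub>L real. \<forall>m. blinfun_apply f y \<le> (SUP n\<in>{m..}. blinfun_apply f (x n))"
    by (rule weak_cluster[OF refl]) (rule bd)
  then obtain y where y: "\<And>(f::'a \<Rightarrow>\<^sub>L real) m. blinfun_apply f y \<le> (SUP n\<in>{m..}. blinfun_apply f (x n))"
    by blast
  have yK: "y \<in> C \<inter> cball a (d + 1 / (real m + 1))" for m
  proof (rule ccontr)
    define K where "K = C \<inter> cball a (d + 1 / (real m + 1))"
    assume "y \<notin> C \<inter> cball a (d + 1 / (real m + 1))"
    then have yn: "y \<notin> K" by (simp add: K_def)
    have xK: "x n \<in> K" if "m \<le> n" for n
    proof -
      have "1 / (real n + 1) \<le> 1 / (real m + 1)" using that by (simp add: frac_le)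
      then show ?thesis using x[of n] by (simp add: K_def dist_norm)
    qed
    have "closed K" "convex K" "K \<noteq> {}" using cl cv xK[of m]
      by (auto simp: K_def intro: closed_Int convex_Int)
    from separation[OF this yn] obtain f :: "'a \<Rightarrow>\<^sub>L real" and e where e: "e > 0"
      and fe: "\<And>c. c \<in> K \<Longrightarrow> blinfun_apply f c \<le> blinfun_apply f y - e" by blast
    have "(SUP n\<in>{m..}. blinfun_apply f (x n)) \<le> blinfun_apply f y - e"
      using fe xK by (intro cSUP_least) auto
    with y[of f m] e show False by simp
  qed
  have yC: "y \<in> C" using yK[of 0] by simp
  have "norm (a - y) \<le> d"
  proof (rule ccontr)
    assume "\<not> norm (a - y) \<le> d"
    then have "norm (a - y) - d > 0" by simp
    then obtain m where m: "inverse (real (Suc m)) < norm (a - y) - d" using reals_Archimedean by blast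
    have "norm (a - y) \<le> d + 1 / (real m + 1)" using yK[of m] by (simp add: dist_norm)
    moreover have "1 / (real m + 1) = inverse (real (Suc m))" by (simp add: inverse_eq_divide add.commute)
    ultimately show False using m by linarith
  qed
  then show ?thesis using yC dle by (meson order_trans)
qed

lemma nearest_unique:
  fixes C :: "'a::real_normed_vector set"
  assumes sc: "strictly_convex_space TYPE('a)" and cv: "convex C"
    and y: "y \<in> C" "\<forall>c\<in>C. norm (a - y) \<le> norm (a - c)"
    and z: "z \<in> C" "norm (a - z) \<le> norm (a - y)"
  shows "z = y"
proof (rule ccontr)
  assume ne: "z \<noteq> y"
  define d where "d = norm (a - y)"
  have dz: "norm (a - z) = d" using z y by (auto simp: d_def intro: antisym)
  have mid: "(1/2) *\<^sub>R y + (1/2) *\<^sub>R z \<in> C" using cv y z by (intro convexD) auto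
  show False
  proof (cases "d = 0")
    case True
    then have "y = a" "z = a" using dz by (auto simp: d_def)
    then show False using ne by simp
  next
    case False
    then have d: "d > 0" by (simp add: d_def)
    define u where "u = (1/d) *\<^sub>R (a - y)"
    define v where "v = (1/d) *\<^sub>R (a - z)"
    have "norm u = 1" "norm v = 1" using d dz by (auto simp: u_def v_def d_def)
    moreover have "u \<noteq> v" using ne d by (auto simp: u_def v_def)
    ultimately have "norm ((1/2) *\<^sub>R (u + v)) < 1" using sc unfolding strictly_convex_space_def by blast
    moreover have "(1/2) *\<^sub>R (u + v) = (1/d) *\<^sub>R (a - ((1/2) *\<^sub>R y + (1/2) *\<^sub>R z))"
    proof -
      have e1: "(1/2) *\<^sub>R (u + v) = (1/d) *\<^sub>R ((1/2) *\<^sub>R ((a - y) + (a - z)))"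
        unfolding u_def v_def scaleR_add_right[symmetric] scaleR_scaleR by (simp add: mult.commute)
      have "(a - y) + (a - z) = (a + a) - (y + z)" by (simp add: algebra_simps)
      then have "(1/2) *\<^sub>R ((a - y) + (a - z)) = (1/2) *\<^sub>R (a + a) - (1/2) *\<^sub>R (y + z)"
        by (simp only: scaleR_diff_right)
      also have "\<dots> = a - ((1/2) *\<^sub>R y + (1/2) *\<^sub>R z)"
        by (subst scaleR_half_double) (simp only: scaleR_add_right)
      finally have e2: "(1/2) *\<^sub>R ((a - y) + (a - z)) = a - ((1/2) *\<^sub>R y + (1/2) *\<^sub>R z)" .
      show ?thesis unfolding e1 e2 ..
    qed
    ultimately have "norm (a - ((1/2) *\<^sub>R y + (1/2) *\<^sub>R z)) < d" using d by simp
    with y(2) mid show False by (fastforce simp: d_def)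
  qed
qed

theorem lemma3p1:
  fixes C :: "'a::banach set" and T :: "'s::semigroup_mult \<Rightarrow> 'a \<Rightarrow> 'a"
  assumes "strictly_convex_space TYPE('a)"
    and "reflexive_space TYPE('a)"
    and "C \<noteq> {}" and "closed C" and "convex C"
    and "representation_on C T"
    and "attractive_points C T \<noteq> {}"
  shows "common_fixed_points C T \<noteq> {}"
proof -
  obtain a where a: "a \<in> attractive_points C T" using assms(7) by blast
  obtain z where z: "z \<in> C" "\<forall>c\<in>C. norm (a - z) \<le> norm (a - c)"
    using nearest_exists[OF assms(2) assms(4) assms(5) assms(3)] by blast
  have "T s z = z" for s
  proof (rule nearest_unique[OF assms(1) assms(5) z])
    show "T s z \<in> C" using assms(6) z(1) by (simp add: representation_on_def)
    show "norm (a - T s z) \<le> norm (a - z)" using a z(1) by (simp add: attractive_points_def)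
  qed
  then have "z \<in> common_fixed_points C T" using z(1) by (simp add: common_fixed_points_def)
  then show ?thesis by blast
qed


end
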